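(* Let $k$ be a positive integer, $\hat s_k$ an integer, $m_{k-1}\in(0,1)$, and $\hat B_{k,\hat s_k}\in[0,2]$. For integers $\ell\ge\hat s_k$ define $$\hat B_{k,\ell}=\min\big\{2,\ m_{k-1}^{\ell-\hat s_k}(\ell-\hat s_k+1)\hat B_{k,\hat s_k}\big\}.$$ Then for every integer $s$ satisfying $m_{k-1}^{s-\hat s_k}\le\frac{1}{s-\hat s_k+1}$ and $s\ge\frac{km_{k-1}}{1-m_{k-1}}+\hat s_k$, and every integer $\ell\ge s$, $$\hat B_{k,\ell}\le\Big(\frac1k+\frac{k-1}{k}m_{k-1}\Big)^{\ell-s}\hat B_{k,s}.$$ *)

theory Defs
  imports Complex_Main
begin

definition Bhat :: "real \<Rightarrow> int \<Rightarrow> real \<Rightarrow> int \<Rightarrow> real" where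
  "Bhat m shat B0 l = min 2 (m ^ nat (l - shat) * real_of_int (l - shat + 1) * B0)"

end

theory Submission
  imports Defs
begin

lemma key_ineq:
  fixes k :: nat and m t :: real
  assumes "k \<ge> 1" "0 < m" "m < 1" "t \<ge> real k * m / (1 - m)"
  shows "m * (t + 2) \<le> (1 / real k + (real k - 1) / real k * m) * (t + 1)"
proof -
  have kp: "real k > 0" using assms(1) by simp
  have "t * (1 - m) \<ge> real k * m" using assms(3,4) by (simp add: field_simps)
  hence h: "t * (1 - m) + 1 - (real k + 1) * m \<ge> 0" using assms(3) by (simp add: algebra_simps)
  have e: "(1 / real k + (real k - 1) / real k * m) * (t + 1) - m * (t + 2)
        = (t * (1 - m) + 1 - (real k + 1) * m) / real k"
    using kp by (simp add: field_simps)
  have "(t * (1 - m) + 1 - (real k + 1) * m) / real k \<ge> 0" using h kp by simp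
  thus ?thesis using e by linarith
qed

lemma iter_ineq:
  fixes k n :: nat and m :: real
  assumes "k \<ge> 1" "0 < m" "m < 1" "real n \<ge> real k * m / (1 - m)"
  shows "m ^ (n + j) * (real (n + j) + 1) \<le> (1 / real k + (real k - 1) / real k * m) ^ j * (m ^ n * (real n + 1))"
proof (induction j)
  case 0 then show ?case by simp
next
  case (Suc j)
  let ?c = "1 / real k + (real k - 1) / real k * m"
  have t: "real (n + j) \<ge> real k * m / (1 - m)" using assms(4) by simp
  have K: "m * (real (n + j) + 2) \<le> ?c * (real (n + j) + 1)"
    using key_ineq[OF assms(1-3) t] .
  have mp: "m ^ (n + j) \<ge> 0" using assms(2) by simp
  have "m ^ (n + Suc j) * (real (n + Suc j) + 1) = m ^ (n + j) * (m * (real (n + j) + 2))"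
    by (simp add: algebra_simps)
  also have "\<dots> \<le> m ^ (n + j) * (?c * (real (n + j) + 1))"
    using K mp by (rule mult_left_mono)
  also have "\<dots> = ?c * (m ^ (n + j) * (real (n + j) + 1))" by simp
  also have "\<dots> \<le> ?c * (?c ^ j * (m ^ n * (real n + 1)))"
  proof (rule mult_left_mono[OF Suc.IH])
    have "real k > 0" using assms(1) by simp
    moreover have "real k - 1 \<ge> 0" using assms(1) by simp
    ultimately show "0 \<le> ?c" using assms(2) by (intro add_nonneg_nonneg mult_nonneg_nonneg divide_nonneg_nonneg) auto
  qed
  also have "\<dots> = ?c ^ Suc j * (m ^ n * (real n + 1))" by simp
  finally show ?case .
qed

theorem lemma5:
  fixes k :: nat and shat s l :: int and m B0 :: real
  assumes "k \<ge> 1"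
    and "0 < m" and "m < 1"
    and "0 \<le> B0" and "B0 \<le> 2"
    and "m ^ nat (s - shat) \<le> 1 / real_of_int (s - shat + 1)"
    and "real_of_int s \<ge> real k * m / (1 - m) + real_of_int shat"
    and "l \<ge> s"
  shows "Bhat m shat B0 l \<le> (1 / real k + (real k - 1) / real k * m) ^ nat (l - s) * Bhat m shat B0 s"
proof -
  define n where "n = nat (s - shat)"
  define j where "j = nat (l - s)"
  let ?c = "1 / real k + (real k - 1) / real k * m"
  have "real k * m / (1 - m) \<ge> 0" using assms(1-3) by simp
  hence sn: "s \<ge> shat" using assms(7) by linarith
  hence ns: "real_of_int (s - shat) = real n" unfolding n_def by simp
  have ln: "nat (l - shat) = n + j" unfolding n_def j_def using sn assms(8) by simp
  have lr: "real_of_int (l - shat + 1) = real (n + j) + 1" using sn assms(8) ln by linarith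
  have sr: "real_of_int (s - shat + 1) = real n + 1" using ns by simp
  have nk: "real n \<ge> real k * m / (1 - m)" using assms(7) ns by simp
  have "m ^ n * (real n + 1) \<le> 1"
    using assms(6) unfolding n_def[symmetric] sr
    by (simp add: field_simps)
  hence f0: "m ^ n * (real n + 1) * B0 \<le> 2"
  proof -
    assume a: "m ^ n * (real n + 1) \<le> 1"
    have "m ^ n * (real n + 1) * B0 \<le> 1 * B0"
      using a assms(4) by (rule mult_right_mono)
    thus ?thesis using assms(5) by simp
  qed
  have Bs: "Bhat m shat B0 s = m ^ n * (real n + 1) * B0"
    unfolding Bhat_def n_def[symmetric] sr using f0 by simp
  have "Bhat m shat B0 l \<le> m ^ (n + j) * (real (n + j) + 1) * B0"
    unfolding Bhat_def ln lr by simp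
  also have "\<dots> \<le> ?c ^ j * (m ^ n * (real n + 1)) * B0"
    using iter_ineq[OF assms(1-3) nk, of j] assms(4) by (rule mult_right_mono)
  also have "\<dots> = ?c ^ j * Bhat m shat B0 s" using Bs by simp
  finally show ?thesis unfolding j_def .
qed

end
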